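(* Let $p\ge3$ be an integer, $\mu\in[0,1)$, $\xi_\mu(t)=\mu t^2+(1-\mu)t^p$, and suppose $y_\mu$ satisfies $\frac{\xi_\mu''(1)}{\xi_\mu'(1)}\le y_\mu\le\frac{\xi_\mu'(1)}{\xi_\mu''(0)}$. Then the equation $h_\mu(t)=0$ has at most two solutions $t\in(0,1)$.
   Context: $y_\mu$ is the unique $y\in(1,\infty)$ with $\frac{\xi_\mu(1)}{\xi_\mu'(1)}=\frac1{y-1}\big(\frac y{y-1}\log y-1\big)$; if $\xi_\mu''(0)=0$ the upper bound is $+\infty$. Let $m_\mu,c_\mu>0$ be the unique solution of $\xi_\mu(1)=\frac1m\big(\frac1m\log\frac{c+m}c-\frac1{c+m}\big)$, $\frac1{\xi_\mu'(1)}=c(c+m)$, let $\phi_\mu(t)=c_\mu+m_\mu(1-t)$, and $h_\mu=\phi_\mu^{-2}-\xi_\mu''$. *)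

theory Defs
  imports Complex_Main
begin

definition xi :: "real \<Rightarrow> nat \<Rightarrow> real \<Rightarrow> real" where
  "xi \<mu> p t = \<mu> * t^2 + (1 - \<mu>) * t^p"

definition xi1 :: "real \<Rightarrow> nat \<Rightarrow> real \<Rightarrow> real" where
  "xi1 \<mu> p t = 2 * \<mu> * t + (1 - \<mu>) * real p * t^(p - 1)"

definition xi2 :: "real \<Rightarrow> nat \<Rightarrow> real \<Rightarrow> real" where
  "xi2 \<mu> p t = 2 * \<mu> + (1 - \<mu>) * real p * (real p - 1) * t^(p - 2)"

definition phi :: "real \<Rightarrow> real \<Rightarrow> real \<Rightarrow> real" where
  "phi c m t = c + m * (1 - t)"

definition hfun :: "real \<Rightarrow> nat \<Rightarrow> real \<Rightarrow> real \<Rightarrow> real \<Rightarrow> real" where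
  "hfun \<mu> p c m t = 1 / (phi c m t)^2 - xi2 \<mu> p t"

end

theory Submission
  imports Defs
begin

lemma three_pts_card:
  fixes S :: "real set"
  assumes "\<And>x y z. x \<in> S \<Longrightarrow> y \<in> S \<Longrightarrow> z \<in> S \<Longrightarrow> x < y \<Longrightarrow> y < z \<Longrightarrow> False"
  shows "finite S \<and> card S \<le> 2"
proof (rule ccontr)
  assume "\<not> (finite S \<and> card S \<le> 2)"
  then obtain B where B: "B \<subseteq> S" "card B = 3"
  proof (cases "finite S")
    case True
    with \<open>\<not> (finite S \<and> card S \<le> 2)\<close> have "3 \<le> card S" by auto
    then show ?thesis using that obtain_subset_with_card_n by metis
  next
    case False
    then show ?thesis using that infinite_arbitrarily_large by metis
  qed
  then obtain x y z where xyz: "B = {x,y,z}" "x \<noteq> y" "y \<noteq> z" "x \<noteq> z"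
    using card_3_iff by metis
  have "x \<in> S" "y \<in> S" "z \<in> S" using B xyz by auto
  then show False using assms xyz(2-4)
    by (metis linorder_neqE_linordered_idom)
qed

lemma core:
  fixes A K a m :: real and q :: nat
  assumes hq: "q \<ge> 1" and hA: "A \<ge> 0" and hK: "K > 0" and hm: "m > 0" and ham: "a - m > 0"
    and h0: "a^2 * A \<le> 1"
    and t: "0 < t1" "t1 < t2" "t2 < t3" "t3 < 1"
    and z1: "(a - m*t1)^2 * (A + K*t1^q) = 1"
    and z2: "(a - m*t2)^2 * (A + K*t2^q) = 1"
    and z3: "(a - m*t3)^2 * (A + K*t3^q) = 1"
  shows False
proof -
  define u where "u t = A + K*t^q" for t :: real
  define u1 where "u1 t = K*real q*t^(q-1)" for t :: real
  define u2 where "u2 t = K*real q*real (q-1)*t^(q-2)" for t :: real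
  define P where "P t = (a - m*t)^2 * u t - 1" for t
  define Q where "Q t = (a - m*t) * u1 t - 2*m*u t" for t
  define dQ where "dQ t = (a - m*t) * u2 t - 3*m*u1 t" for t
  have dP: "DERIV P t :> (a - m*t) * Q t" for t
    unfolding P_def Q_def u_def u1_def
    by (auto intro!: derivative_eq_intros simp: power2_eq_square algebra_simps)
  have dQd: "DERIV Q t :> dQ t" for t
    unfolding dQ_def Q_def u_def u1_def u2_def
    by (auto intro!: derivative_eq_intros simp: algebra_simps diff_diff_add numeral_2_eq_2)
  have pos: "a - m*t > 0" if "t \<le> 1" for t
  proof -
    have "m*t \<le> m" using that hm by (simp add: mult_left_le)
    then show ?thesis using ham by linarith
  qed
  have P0: "P t = 0" if "t = t1 \<or> t = t2 \<or> t = t3" for t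
    using that z1 z2 z3 unfolding P_def u_def by auto
  obtain s1 where s1: "t1 < s1" "s1 < t2" "P t2 - P t1 = (t2 - t1) * ((a - m*s1) * Q s1)"
    using MVT2[OF t(2), of P "\<lambda>t. (a - m*t) * Q t"] dP by blast
  have Qs1: "Q s1 = 0" using s1 P0 pos[of s1] t by auto
  obtain s2 where s2: "t2 < s2" "s2 < t3" "P t3 - P t2 = (t3 - t2) * ((a - m*s2) * Q s2)"
    using MVT2[OF t(3), of P "\<lambda>t. (a - m*t) * Q t"] dP by blast
  have Qs2: "Q s2 = 0" using s2 P0 pos[of s2] t by auto
  have "s1 < s2" using s1 s2 by linarith
  obtain r where r: "s1 < r" "r < s2" "Q s2 - Q s1 = (s2 - s1) * dQ r"
    using MVT2[OF \<open>s1 < s2\<close>, of Q dQ] dQd by blast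
  have dQr: "dQ r = 0" using r Qs1 Qs2 by auto
  have r0: "r > 0" using r s1 t by linarith
  have dQpos: "dQ t > 0" if "0 < t" "t < r" for t
  proof (cases "q = 1")
    case True
    then have "dQ r = - 3*m*K" unfolding dQ_def u1_def u2_def by simp
    then show ?thesis using dQr hm hK by simp
  next
    case False
    then have q2: "q \<ge> 2" using hq by simp
    have form: "dQ x = K*real q*x^(q-2) * (real (q-1)*(a - m*x) - 3*m*x)" for x
    proof -
      have "x^(q-1) = x^(q-2)*x" using q2
        by (metis Suc_diff_Suc Suc_1 diff_Suc_1 less_le_trans lessI power_Suc2 numeral_2_eq_2)
      then show ?thesis unfolding dQ_def u1_def u2_def by (simp add: algebra_simps)
    qed
    have kq: "K*real q*r^(q-2) > 0" using hK q2 r0 by simp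
    have br: "real (q-1)*(a - m*r) - 3*m*r = 0" using dQr form[of r] kq by (metis mult_eq_0_iff order_less_irrefl)
    have "real (q-1)*(a - m*t) - 3*m*t - (real (q-1)*(a - m*r) - 3*m*r) = (real (q-1)*m + 3*m)*(r - t)"
      by (simp add: algebra_simps)
    moreover have "(real (q-1)*m + 3*m)*(r - t) > 0" using hm that by (intro mult_pos_pos) (auto intro: add_nonneg_pos)
    ultimately have "real (q-1)*(a - m*t) - 3*m*t > 0" using br by linarith
    moreover have "K*real q*t^(q-2) > 0" using hK q2 that by simp
    ultimately show ?thesis using form[of t] by simp
  qed
  have Qneg: "Q t < 0" if tt: "0 \<le> t" "t < s1" for t
  proof -
    obtain xi where xi: "t < xi" "xi < s1" "Q s1 - Q t = (s1 - t) * dQ xi"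
      using MVT2[OF tt(2), of Q dQ] dQd by blast
    have "dQ xi > 0" using dQpos[of xi] xi tt r by linarith
    then have "(s1 - t) * dQ xi > 0" using xi by simp
    then show ?thesis using xi Qs1 by linarith
  qed
  have "0 < t1" using t by simp
  obtain xi where xi: "0 < xi" "xi < t1" "P t1 - P 0 = (t1 - 0) * ((a - m*xi) * Q xi)"
    using MVT2[OF \<open>0 < t1\<close>, of P "\<lambda>t. (a - m*t) * Q t"] dP by blast
  have "Q xi < 0" using Qneg[of xi] xi s1 by linarith
  moreover have "a - m*xi > 0" using pos[of xi] xi t by linarith
  ultimately have "(a - m*xi) * Q xi < 0" by (simp add: mult_pos_neg)
  then have "t1 * ((a - m*xi) * Q xi) < 0" using t by (simp add: mult_pos_neg)
  moreover have "P 0 \<le> 0" unfolding P_def u_def using h0 hq by (simp add: power2_eq_square zero_power)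
  ultimately show False using xi P0[of t1] by auto
qed

theorem lemma5p7:
  fixes p :: nat and \<mu> y m c :: real
  assumes hp: "p \<ge> 3"
    and hmu: "0 \<le> \<mu>" "\<mu> < 1"
    and hy: "y > 1"
    and hy_def: "xi \<mu> p 1 / xi1 \<mu> p 1 = (1 / (y - 1)) * (y / (y - 1) * ln y - 1)"
    and hy_uniq: "\<And>z. z > 1 \<Longrightarrow> xi \<mu> p 1 / xi1 \<mu> p 1 = (1 / (z - 1)) * (z / (z - 1) * ln z - 1) \<Longrightarrow> z = y"
    and hm: "m > 0" and hc: "c > 0"
    and hmc1: "xi \<mu> p 1 = (1 / m) * ((1 / m) * ln ((c + m) / c) - 1 / (c + m))"
    and hmc2: "1 / xi1 \<mu> p 1 = c * (c + m)"
    and hmc_uniq: "\<And>m' c'. m' > 0 \<Longrightarrow> c' > 0 \<Longrightarrow>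
        xi \<mu> p 1 = (1 / m') * ((1 / m') * ln ((c' + m') / c') - 1 / (c' + m')) \<Longrightarrow>
        1 / xi1 \<mu> p 1 = c' * (c' + m') \<Longrightarrow> m' = m \<and> c' = c"
    and hlow: "xi2 \<mu> p 1 / xi1 \<mu> p 1 \<le> y"
    and hup: "xi2 \<mu> p 0 \<noteq> 0 \<Longrightarrow> y \<le> xi1 \<mu> p 1 / xi2 \<mu> p 0"
  shows "finite {t \<in> {0<..<1}. hfun \<mu> p c m t = 0} \<and> card {t \<in> {0<..<1}. hfun \<mu> p c m t = 0} \<le> 2"
proof -
  define a where "a = c + m"
  define X where "X = xi1 \<mu> p 1"
  define K where "K = (1 - \<mu>) * real p * (real p - 1)"
  have xi_1: "xi \<mu> p 1 = 1" by (simp add: xi_def)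
  have X: "X = 2*\<mu> + (1 - \<mu>) * real p" by (simp add: X_def xi1_def)
  have Xpos: "X > 0" 
  proof -
    have "(1-\<mu>)*real p > 0" using hmu hp by simp
    then show ?thesis using X hmu by linarith
  qed
  have ca: "c * a = 1 / X" using hmc2 by (simp add: a_def X_def)
  have apos: "a > 0" "a - m > 0" using hc hm by (auto simp: a_def)
  have za: "a / c > 1" using hc hm by (simp add: a_def)
  have "xi \<mu> p 1 / xi1 \<mu> p 1 = (1 / (a/c - 1)) * ((a/c) / (a/c - 1) * ln (a/c) - 1)"
  proof -
    have e1: "a/c - 1 = m/c" using hc by (simp add: a_def field_simps)
    have "xi \<mu> p 1 / xi1 \<mu> p 1 = c * a * ((1 / m) * ((1 / m) * ln (a / c) - 1 / a))"
      using hmc1 ca xi_1 by (simp add: X_def a_def)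
    also have "\<dots> = (1 / (a/c - 1)) * ((a/c) / (a/c - 1) * ln (a/c) - 1)"
      unfolding e1 using hc hm apos by (simp add: field_simps)
    finally show ?thesis .
  qed
  then have yac: "y = a / c" using hy_uniq za by auto
  have h0: "a^2 * (2*\<mu>) \<le> 1"
  proof (cases "\<mu> = 0")
    case True then show ?thesis by simp
  next
    case False
    then have mpos: "\<mu> > 0" using hmu by simp
    have x20: "xi2 \<mu> p 0 = 2*\<mu>" using hp by (simp add: xi2_def zero_power)
    have "a / c \<le> X / (2*\<mu>)" using hup x20 mpos yac by (simp add: X_def)
    moreover have "X = 1 / (c*a)" using ca Xpos hc apos by (simp add: field_simps)
    ultimately have "a / c \<le> 1 / (c*a*(2*\<mu>))" by simp
    then show ?thesis using hc apos mpos by (simp add: field_simps power2_eq_square)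
  qed
  have zero: "(a - m*t)^2 * (2*\<mu> + K*t^(p-2)) = 1" if "t \<in> {t \<in> {0<..<1}. hfun \<mu> p c m t = 0}" for t
  proof -
    from that have t: "0 < t" "t < 1" "hfun \<mu> p c m t = 0" by auto
    have ph: "phi c m t = a - m*t" by (simp add: phi_def a_def algebra_simps)
    have "a - m*t > 0" 
    proof -
      have "m*t < m" using hm t by simp
      then show ?thesis using apos by linarith
    qed
    moreover have "xi2 \<mu> p t = 2*\<mu> + K*t^(p-2)" by (simp add: xi2_def K_def)
    ultimately show ?thesis using t(3) unfolding hfun_def ph by (simp add: field_simps)
  qed
  show ?thesis
  proof (rule three_pts_card)
    fix t1 t2 t3 assume h: "t1 \<in> {t \<in> {0<..<1}. hfun \<mu> p c m t = 0}"
      "t2 \<in> {t \<in> {0<..<1}. hfun \<mu> p c m t = 0}" "t3 \<in> {t \<in> {0<..<1}. hfun \<mu> p c m t = 0}"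
      "t1 < t2" "t2 < t3"
    have Kpos: "K > 0" using hp hmu by (simp add: K_def)
    have q: "p - 2 \<ge> 1" using hp by simp
    have A: "2*\<mu> \<ge> 0" using hmu by simp
    have tt: "0 < t1" "t3 < 1" using h by auto
    show False
      by (rule core[OF q A Kpos hm apos(2) h0 tt(1) h(4) h(5) tt(2) zero[OF h(1)] zero[OF h(2)] zero[OF h(3)]])
  qed
qed

end
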